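(* Let $t\ge1$, $k\ge1$, $N\ge1$ with $\log k\le N/(4t)$. Let $A^1,\dots,A^k$ be (jointly distributed) random variables, each taking values in $\{0,1\}^N$, such that $\max_{a^1,\dots,a^k}\Pr[A^1\cdots A^k=a^1\cdots a^k]\le2^{-Nk/t}$. Then $$\Pr\Big[\big|\{A^1,\dots,A^k\}\big|\le\tfrac{k}{2t}\Big]\le2^{-Nk/(4t)},$$ i.e., the probability that $A^1,\dots,A^k$ take at most $k/(2t)$ distinct values is at most $2^{-Nk/(4t)}$.
   Context: Logarithms are base 2. *)

theory Defs
  imports "HOL-Probability.Probability"
begin

end

theory Submission
  imports Defs
begin

lemma bool_lists_card: "card {a :: bool list. length a = N} = 2 ^ N"
  using card_lists_length_eq[of "UNIV :: bool set" N] by (simp add: card_UNIV_bool)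

lemma bool_lists_finite: "finite {a :: bool list. length a = N}"
  using finite_lists_length_eq[of "UNIV :: bool set" N] by simp

lemma count_bound:
  fixes k N m :: nat
  defines "B \<equiv> {a :: bool list. length a = N}"
  defines "W \<equiv> {ws. set ws \<subseteq> B \<and> length ws = m}"
  defines "F \<equiv> {0..<k} \<rightarrow>\<^sub>E {0..<m}"
  assumes S: "\<And>as. as \<in> S \<Longrightarrow> length as = k \<and> set as \<subseteq> B \<and> card (set as) \<le> m \<and> as \<noteq> []"
  shows "finite S \<and> card S \<le> 2 ^ (N * m) * m ^ k"
proof -
  let ?g = "\<lambda>(ws :: bool list list, f :: nat \<Rightarrow> nat). map (\<lambda>i. ws ! f i) [0..<k]"
  have fin: "finite (W \<times> F)"
    unfolding W_def F_def B_def using finite_lists_length_eq[OF bool_lists_finite]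
    by (intro finite_cartesian_product finite_PiE) auto
  have sub: "S \<subseteq> ?g ` (W \<times> F)"
  proof
    fix as assume as: "as \<in> S"
    note h = S[OF as]
    define D where "D = set as"
    have Dne: "D \<noteq> {}" using h D_def by auto
    obtain xs where xs: "set xs = D" "distinct xs"
      using finite_distinct_list[of D] D_def by auto
    have lxs: "length xs = card D" using xs distinct_card by metis
    have xsne: "xs \<noteq> []" using xs Dne by auto
    define ws where "ws = xs @ replicate (m - card D) (hd xs)"
    have lws: "length ws = m" using lxs h D_def ws_def by simp
    have sws: "set ws = D" using xs xsne ws_def by (auto simp: hd_in_set)
    define f where "f = (\<lambda>i. if i < k then (SOME j. j < m \<and> ws ! j = as ! i) else undefined)"
    have fi: "f i < m \<and> ws ! f i = as ! i" if "i < k" for i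
    proof -
      have "as ! i \<in> set ws" using sws D_def h that by auto
      then obtain j where "j < length ws" "ws ! j = as ! i" by (auto simp: in_set_conv_nth)
      then have "\<exists>j. j < m \<and> ws ! j = as ! i" using lws by auto
      then have "(SOME j. j < m \<and> ws ! j = as ! i) < m \<and> ws ! (SOME j. j < m \<and> ws ! j = as ! i) = as ! i"
        by (rule someI_ex)
      then show ?thesis unfolding f_def using that by simp
    qed
    have "f \<in> F" unfolding F_def using fi by (auto simp: f_def)
    moreover have "ws \<in> W" unfolding W_def using lws sws D_def h by auto
    moreover have "?g (ws, f) = as" using h fi by (auto intro: nth_equalityI)
    ultimately show "as \<in> ?g ` (W \<times> F)" by force
  qed
  have "card S \<le> card (?g ` (W \<times> F))" using sub fin by (intro card_mono) auto
  also have "\<dots> \<le> card (W \<times> F)" using fin by (rule card_image_le)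
  also have "\<dots> = card W * card F" by (rule card_cartesian_product)
  also have "card W = (2 ^ N) ^ m" unfolding W_def B_def
    using card_lists_length_eq[of B m] bool_lists_card[of N] bool_lists_finite[of N] B_def by simp
  also have "card F = m ^ k" unfolding F_def by (simp add: card_PiE)
  finally have c: "card S \<le> (2 ^ N) ^ m * m ^ k" .
  moreover have "finite S" using sub fin by (meson finite_imageI finite_subset)
  ultimately show ?thesis by (simp add: power_mult)
qed

theorem mainTheorem18:
  fixes t :: real and k N :: nat and p :: "bool list list pmf"
  assumes "t \<ge> 1" and "k \<ge> 1" and "N \<ge> 1"
    and "log 2 (real k) \<le> real N / (4 * t)"
    and "\<And>as. as \<in> set_pmf p \<Longrightarrow> length as = k \<and> (\<forall>a \<in> set as. length a = N)"
    and "\<And>as. pmf p as \<le> 2 powr (- (real N * real k / t))"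
  shows "measure_pmf.prob p {as. real (card (set as)) \<le> real k / (2 * t)}
           \<le> 2 powr (- (real N * real k / (4 * t)))"
proof -
  define m where "m = nat \<lfloor>real k / (2 * t)\<rfloor>"
  define S where "S = {as. real (card (set as)) \<le> real k / (2 * t)} \<inter> set_pmf p"
  have mle: "real m \<le> real k / (2 * t)" unfolding m_def using assms(1)
    by (simp add: of_nat_nat)
  have mk: "m \<le> k"
  proof -
    have "real k * 1 \<le> real k * (2 * t)" using assms(1) by (intro mult_left_mono) auto
    then have "real k / (2 * t) \<le> real k" using assms(1) by (simp add: field_simps)
    then show ?thesis using mle by linarith
  qed
  have Sprop: "length as = k \<and> set as \<subseteq> {a :: bool list. length a = N} \<and> card (set as) \<le> m \<and> as \<noteq> []"
    if "as \<in> S" for as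
  proof -
    have "real (card (set as)) \<le> real k / (2 * t)" using that S_def by auto
    then have "card (set as) \<le> m" unfolding m_def
      by (metis le_nat_floor floor_of_nat of_int_of_nat_eq floor_mono nat_int)
    then show ?thesis using assms(5)[of as] assms(2) that S_def by auto
  qed
  from count_bound[of S k N m] Sprop
  have cS: "finite S" "card S \<le> 2 ^ (N * m) * m ^ k" by auto
  have "measure_pmf.prob p {as. real (card (set as)) \<le> real k / (2 * t)} = measure_pmf.prob p S"
    unfolding S_def by (simp add: measure_Int_set_pmf)
  also have "\<dots> = sum (pmf p) S" using cS by (simp add: measure_measure_pmf_finite)
  also have "\<dots> \<le> sum (\<lambda>_. 2 powr (- (real N * real k / t))) S"
    by (intro sum_mono assms(6))
  also have "\<dots> = real (card S) * 2 powr (- (real N * real k / t))" by simp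
  also have "\<dots> \<le> (2 powr (real N * real k / (2 * t)) * 2 powr (real N * real k / (4 * t)))
                  * 2 powr (- (real N * real k / t))"
  proof (rule mult_right_mono)
    have a: "real (2 ^ (N * m)) \<le> 2 powr (real N * real k / (2 * t))"
    proof -
      have "real (2 ^ (N * m)) = 2 powr (real N * real m)"
        by (simp add: powr_realpow[symmetric])
      also have "\<dots> \<le> 2 powr (real N * real k / (2 * t))"
      proof (rule powr_mono)
        have "real N * real m \<le> real N * (real k / (2 * t))" using mle by (intro mult_left_mono) auto
        then show "real N * real m \<le> real N * real k / (2 * t)" by simp
      qed simp
      finally show ?thesis .
    qed
    have b: "real (m ^ k) \<le> 2 powr (real N * real k / (4 * t))"
    proof -
      have "real (m ^ k) \<le> real k ^ k" using mk by (simp add: power_mono)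
      also have "\<dots> = 2 powr (log 2 (real k) * real k)"
        using assms(2) by (simp add: powr_powr[symmetric] powr_realpow)
      also have "\<dots> \<le> 2 powr (real N / (4 * t) * real k)"
        using assms(4) by (intro powr_mono mult_right_mono) auto
      finally show ?thesis by simp
    qed
    have "real (card S) \<le> real (2 ^ (N * m)) * real (m ^ k)"
      using cS(2) by (metis of_nat_le_iff of_nat_mult)
    also have "\<dots> \<le> 2 powr (real N * real k / (2 * t)) * 2 powr (real N * real k / (4 * t))"
      using a b by (intro mult_mono) auto
    finally show "real (card S) \<le> 2 powr (real N * real k / (2 * t)) * 2 powr (real N * real k / (4 * t))" .
  qed simp
  also have "\<dots> = 2 powr (real N * real k / (2 * t) + real N * real k / (4 * t) + - (real N * real k / t))"
    by (simp only: powr_add)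
  also have "real N * real k / (2 * t) + real N * real k / (4 * t) + - (real N * real k / t)
             = - (real N * real k / (4 * t))"
    using assms(1) by (simp add: field_simps)
  finally show ?thesis .
qed

end
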